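(* Let $l\ge1$ and consider a path graph with vertices $v_0,\dots,v_l$, where $v_i,v_j$ are adjacent iff $|i-j|=1$, whose vertices are each labeled with one of two colors $5$ and $6$. A move consists of choosing two adjacent vertices with the same color and changing the colors of both. If either $l$ is even and $v_0,v_l$ have different colors, or $l$ is odd and $v_0,v_l$ have the same color, then there is a finite sequence of moves after which $v_0$ and $v_l$ have both switched colors and every other vertex has its original color. *)

theory Defs
  imports Main
begin

(* Two colours 5 and 6, encoded as bool (True = colour 5, False = colour 6).
   A colouring of the path v_0..v_l is a function nat => bool; only the values
   at 0..l are relevant (moves never touch other indices). *)

definition path_move :: "nat \<Rightarrow> (nat \<Rightarrow> bool) \<Rightarrow> (nat \<Rightarrow> bool) \<Rightarrow> bool" where
  "path_move l c c' \<longleftrightarrow>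
     (\<exists>i. i < l \<and> c i = c (Suc i) \<and>
          c' = c(i := \<not> c i, Suc i := \<not> c (Suc i)))"

end

theory Submission
  imports Defs
begin

lemma swap_gen:
  "\<forall>a c. a + Suc k \<le> l \<longrightarrow> ((c a = c (a + Suc k)) = even k) \<longrightarrow>
     (path_move l)\<^sup>*\<^sup>* c (c(a := \<not> c a, a + Suc k := \<not> c (a + Suc k)))"
proof (induction k)
  case 0
  show ?case
  proof (intro allI impI)
    fix a and c :: "nat \<Rightarrow> bool" assume h: "a + Suc 0 \<le> l" "(c a = c (a + Suc 0)) = even (0::nat)"
    have "path_move l c (c(a := \<not> c a, Suc a := \<not> c (Suc a)))"
      unfolding path_move_def using h by (intro exI[of _ a]) auto
    then show "(path_move l)\<^sup>*\<^sup>* c (c(a := \<not> c a, a + Suc 0 := \<not> c (a + Suc 0)))"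
      by simp
  qed
next
  case (Suc k)
  show ?case
  proof (intro allI impI)
    fix a and c :: "nat \<Rightarrow> bool" assume h: "a + Suc (Suc k) \<le> l" "(c a = c (a + Suc (Suc k))) = even (Suc k)"
    define b where "b = a + Suc (Suc k)"
    have bb: "Suc a + Suc k = b" "a + Suc (Suc k) = b" "b \<noteq> a" "b \<noteq> Suc a" by (auto simp: b_def)
    show "(path_move l)\<^sup>*\<^sup>* c (c(a := \<not> c a, a + Suc (Suc k) := \<not> c (a + Suc (Suc k))))"
    proof (cases "c (Suc a) = c a")
      case False
      have "(c (Suc a) = c b) = even k" using h False by (auto simp: b_def)
      then have r1: "(path_move l)\<^sup>*\<^sup>* c (c(Suc a := \<not> c (Suc a), b := \<not> c b))"
        using Suc.IH[rule_format, of "Suc a" c] h bb by auto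
      define c1 where "c1 = c(Suc a := \<not> c (Suc a), b := \<not> c b)"
      have "path_move l c1 (c1(a := \<not> c1 a, Suc a := \<not> c1 (Suc a)))"
        unfolding path_move_def using h bb False
        by (intro exI[of _ a]) (auto simp: c1_def)
      moreover have "c1(a := \<not> c1 a, Suc a := \<not> c1 (Suc a)) = c(a := \<not> c a, b := \<not> c b)"
        using bb False by (auto simp: c1_def fun_eq_iff)
      ultimately show ?thesis using r1 bb unfolding c1_def
        by (metis rtranclp.rtrancl_into_rtrancl)
    next
      case True
      define c1 where "c1 = c(a := \<not> c a, Suc a := \<not> c (Suc a))"
      have m: "path_move l c c1"
        unfolding path_move_def c1_def using h True by (intro exI[of _ a]) auto
      have "(c1 (Suc a) = c1 b) = even k" using h True bb by (auto simp: c1_def b_def)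
      then have r1: "(path_move l)\<^sup>*\<^sup>* c1 (c1(Suc a := \<not> c1 (Suc a), b := \<not> c1 b))"
        using Suc.IH[rule_format, of "Suc a" c1] h bb by auto
      moreover have "c1(Suc a := \<not> c1 (Suc a), b := \<not> c1 b) = c(a := \<not> c a, b := \<not> c b)"
        using bb True by (auto simp: c1_def fun_eq_iff)
      ultimately show ?thesis using m bb
        by (metis converse_rtranclp_into_rtranclp)
    qed
  qed
qed

theorem lemma13:
  fixes l :: nat and c :: "nat \<Rightarrow> bool"
  assumes "l \<ge> 1"
    and "(even l \<and> c 0 \<noteq> c l) \<or> (odd l \<and> c 0 = c l)"
  shows "\<exists>c'. (path_move l)\<^sup>*\<^sup>* c c' \<and>
              c' 0 = (\<not> c 0) \<and> c' l = (\<not> c l) \<and>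
              (\<forall>i. 0 < i \<and> i < l \<longrightarrow> c' i = c i)"
proof -
  obtain k where k: "l = Suc k" using assms(1) by (cases l) auto
  have "(c 0 = c (0 + Suc k)) = even k" using assms(2) k by auto
  then have "(path_move l)\<^sup>*\<^sup>* c (c(0 := \<not> c 0, 0 + Suc k := \<not> c (0 + Suc k)))"
    using swap_gen[of k l, rule_format, of 0 c] k by auto
  then show ?thesis using k by (intro exI[of _ "c(0 := \<not> c 0, l := \<not> c l)"]) auto
qed

end
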